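(* Let $G=(V,E)$ be a graph with $n$ vertices, $m$ edges and maximum degree $\Delta$, and let $c>0$ be the constant determining the threshold $\tau=(c+1)\log n$. The randomized variant of Procedure Edge-Coloring with parameter $h$ satisfying $\log\left(\Delta\cdot\frac{\log\log n}{4\log n}\right)\le h\le\log\Delta-2$ computes a proper $(\Delta+3\cdot2^h)$-edge-coloring of $G$ in $O\left(m\left(\frac{\Delta}{2^h}\right)^{18}+m\cdot h\right)$ time with probability at least $1-\frac{1}{n^c}$.
   Context: Logarithms are base 2. A proper $k$-edge-coloring is a map $\varphi:E\to\{1,\dots,k\}$ with distinct colors on distinct edges sharing an endpoint. A degree-splitting of $H$ with discrepancy $\kappa$ is a partition $(E_1,E_2)$ of $E(H)$ with $|\deg_{E_1}(v)-\deg_{E_2}(v)|\le\kappa$ for all $v$. Procedure Edge-Coloring$(H,h)$: if $h=0$, return a $(\Delta(H)+1)$-edge-coloring of $H$ with palette $\{1,\dots,\Delta(H)+1\}$ computed by a base-case subroutine. Otherwise compute in $O(|E(H)|)$ time a degree-splitting $(E_1,E_2)$ of $H$ with discrepancy at most 2 and $\{|E_1|,|E_2|\}=\{\lfloor |E(H)|/2\rfloor,\lceil |E(H)|/2\rceil\}$; let $H_1=(V(H),E_1)$, $H_2=(V(H),E_2)$ with isolated vertices discarded; compute $\varphi_1=$ Edge-Coloring$(H_1,h-1)$, $\varphi_2=$ Edge-Coloring$(H_2,h-1)$; return $\varphi=\varphi_1$ on $E_1$ and $\varphi=p_1+\varphi_2$ on $E_2$, where $p_1$ is the palette size of $\varphi_1$.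 Randomized variant: in the base case, for an input with $n'$ vertices, $m'$ edges and maximum degree $\Delta'$, if $n'\ge\tau$ a randomized algorithm is used that outputs a proper $(\Delta'+1)$-edge-coloring in $O(\Delta'^{18}n')$ time with probability at least $1-\Delta'^{-n'}$; otherwise a deterministic algorithm is used that outputs a proper $(\Delta'+1)$-edge-coloring in $O(m'\Delta'\log n')$ time. *)

theory Defs
  imports "HOL-Probability.Probability_Mass_Function"
begin

section \<open>Graphs (given by their edge sets; vertices = non-isolated vertices)\<close>

definition is_graph :: "'a set set \<Rightarrow> bool" where
  "is_graph E \<longleftrightarrow> finite E \<and> (\<forall>e\<in>E. card e = 2)"

definition verts :: "'a set set \<Rightarrow> 'a set" where
  "verts E = \<Union>E"

definition deg :: "'a set set \<Rightarrow> 'a \<Rightarrow> nat" where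
  "deg E v = card {e\<in>E. v \<in> e}"

definition maxdeg :: "'a set set \<Rightarrow> nat" where
  "maxdeg E = Max (insert 0 (deg E ` verts E))"

definition proper_edge_coloring :: "'a set set \<Rightarrow> nat \<Rightarrow> ('a set \<Rightarrow> nat) \<Rightarrow> bool" where
  "proper_edge_coloring E k \<phi> \<longleftrightarrow>
     (\<forall>e\<in>E. \<phi> e \<in> {1..k}) \<and>
     (\<forall>e\<in>E. \<forall>e'\<in>E. e \<noteq> e' \<and> e \<inter> e' \<noteq> {} \<longrightarrow> \<phi> e \<noteq> \<phi> e')"

definition degree_splitting :: "'a set set \<Rightarrow> 'a set set \<Rightarrow> 'a set set \<Rightarrow> nat \<Rightarrow> bool" where
  "degree_splitting E E1 E2 \<kappa> \<longleftrightarrow>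
     E1 \<union> E2 = E \<and> E1 \<inter> E2 = {} \<and>
     (\<forall>v. \<bar>int (deg E1 v) - int (deg E2 v)\<bar> \<le> int \<kappa>)"

text \<open>
  Subroutines (abstract):
   S: splitting subroutine, returns (E1, E2, running time);
   R: randomized base algorithm, a distribution over (coloring, running time);
   D: deterministic base algorithm, returns (coloring, running time).
  tau is the threshold. The procedure returns a distribution over
  (coloring, palette size, total running time).  The running time of a
  recursive call is the splitting time plus |E(H)| for building the
  subgraphs / combining, plus the times of the two recursive calls.\<close>

fun edge_coloring ::
  "('a set set \<Rightarrow> 'a set set \<times> 'a set set \<times> nat)
   \<Rightarrow> ('a set set \<Rightarrow> (('a set \<Rightarrow> nat) \<times> nat) pmf)
   \<Rightarrow> ('a set set \<Rightarrow> ('a set \<Rightarrow> nat) \<times> nat)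
   \<Rightarrow> real \<Rightarrow> 'a set set \<Rightarrow> nat \<Rightarrow> (('a set \<Rightarrow> nat) \<times> nat \<times> nat) pmf" where
  "edge_coloring S R D \<tau> H 0 =
     (if \<tau> \<le> real (card (verts H))
      then map_pmf (\<lambda>(\<phi>, t). (\<phi>, maxdeg H + 1, t)) (R H)
      else return_pmf (case D H of (\<phi>, t) \<Rightarrow> (\<phi>, maxdeg H + 1, t)))"
| "edge_coloring S R D \<tau> H (Suc h) =
     (case S H of (E1, E2, t0) \<Rightarrow>
        bind_pmf (edge_coloring S R D \<tau> E1 h) (\<lambda>(\<phi>1, p1, t1).
        bind_pmf (edge_coloring S R D \<tau> E2 h) (\<lambda>(\<phi>2, p2, t2).
        return_pmf (\<lambda>e. if e \<in> E1 then \<phi>1 e else p1 + \<phi>2 e,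
                    p1 + p2, t0 + card H + t1 + t2))))"

end

theory Submission
  imports Defs "HOL-Probability.Product_PMF"
begin


lemma finite_verts: "is_graph E \<Longrightarrow> finite (verts E)"
  unfolding is_graph_def verts_def
  by (metis card.infinite finite_Union zero_neq_numeral)

lemma deg_zero_notin: "v \<notin> verts E \<Longrightarrow> deg E v = 0"
  unfolding deg_def verts_def by (metis (mono_tags, lifting) Collect_empty_eq UnionI card.empty)

lemma maxdeg_cases: "is_graph E \<Longrightarrow> maxdeg E = 0 \<or> (\<exists>w. maxdeg E = deg E w)"
proof -
  assume g: "is_graph E"
  have "maxdeg E \<in> insert 0 (deg E ` verts E)"
    unfolding maxdeg_def by (rule Max_in) (auto simp: finite_verts[OF g])
  then show ?thesis by auto
qed

lemma deg_le_maxdeg: "is_graph E \<Longrightarrow> deg E v \<le> maxdeg E"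
proof (cases "v \<in> verts E")
  case True
  assume g: "is_graph E"
  then show ?thesis unfolding maxdeg_def using True
    by (intro Max_ge) (auto simp: finite_verts[OF g])
qed (simp add: deg_zero_notin)

lemma deg_split:
  assumes "finite H" "E1 \<union> E2 = H" "E1 \<inter> E2 = {}"
  shows "deg H v = deg E1 v + deg E2 v"
proof -
  have "{e\<in>H. v \<in> e} = {e\<in>E1. v \<in> e} \<union> {e\<in>E2. v \<in> e}" using assms by auto
  moreover have "finite E1" "finite E2" using assms by auto
  ultimately show ?thesis unfolding deg_def using assms
    by (subst card_Un_disjoint[symmetric]) auto
qed

lemma card_verts_le: "is_graph E \<Longrightarrow> card (verts E) \<le> 2 * card E"
proof -
  assume g: "is_graph E"
  have "card (verts E) \<le> sum card E" unfolding verts_def by (rule card_Union_le_sum_card)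
  also have "\<dots> = sum (\<lambda>_. 2) E" using g unfolding is_graph_def by (intro sum.cong) auto
  finally show ?thesis by simp
qed

lemma card_E_le: "is_graph E \<Longrightarrow> card E \<le> card (verts E) ^ 2"
proof -
  assume g: "is_graph E"
  have "E \<subseteq> (\<lambda>(a,b). {a,b}) ` (verts E \<times> verts E)"
  proof
    fix e assume e: "e \<in> E"
    then have "card e = 2" using g unfolding is_graph_def by auto
    then obtain a b where "e = {a,b}" by (meson card_2_iff)
    then show "e \<in> (\<lambda>(a,b). {a,b}) ` (verts E \<times> verts E)" using e unfolding verts_def by force
  qed
  then have "card E \<le> card ((\<lambda>(a,b). {a,b}) ` (verts E \<times> verts E))"
    by (intro card_mono) (auto simp: finite_verts[OF g])
  also have "\<dots> \<le> card (verts E \<times> verts E)" by (rule card_image_le) (auto simp: finite_verts[OF g])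
  finally show ?thesis by (simp add: power2_eq_square card_cartesian_product)
qed

lemma deg_le_card_verts: "is_graph E \<Longrightarrow> deg E v \<le> card (verts E)"
proof -
  assume g: "is_graph E"
  have "{e\<in>E. v \<in> e} \<subseteq> (\<lambda>w. {v,w}) ` verts E"
  proof
    fix e assume e: "e \<in> {e\<in>E. v \<in> e}"
    then have "card e = 2" using g unfolding is_graph_def by auto
    then obtain a b where ab: "e = {a,b}" by (meson card_2_iff)
    then show "e \<in> (\<lambda>w. {v,w}) ` verts E" using e unfolding verts_def by (auto simp: insert_commute)
  qed
  then have "deg E v \<le> card ((\<lambda>w. {v,w}) ` verts E)" unfolding deg_def
    by (intro card_mono) (auto simp: finite_verts[OF g])
  also have "\<dots> \<le> card (verts E)" by (rule card_image_le) (auto simp: finite_verts[OF g])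
  finally show ?thesis .
qed

lemma proper_mono: "proper_edge_coloring E k \<phi> \<Longrightarrow> k \<le> k' \<Longrightarrow> proper_edge_coloring E k' \<phi>"
  unfolding proper_edge_coloring_def by auto

lemma subgraph: "is_graph H \<Longrightarrow> E1 \<subseteq> H \<Longrightarrow> is_graph E1"
  unfolding is_graph_def by (auto intro: finite_subset)



definition Mh :: "real \<Rightarrow> nat \<Rightarrow> real" where "Mh M h = 2 + (M - 2) / 2 ^ h"

definition beta :: "real \<Rightarrow> real \<Rightarrow> real \<Rightarrow> real \<Rightarrow> nat \<Rightarrow> real" where
  "beta Cp \<tau> M Sz h = 2 * Cp * Mh M h ^ 18 +
     (if (Sz + 1) / 2 ^ h - 1 < \<tau>^2 then Cp * Mh M h * max 0 (log 2 \<tau>) else 0)"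

lemma beta_step: "beta Cp \<tau> ((M + 2) / 2) ((Sz - 1) / 2) h = beta Cp \<tau> M Sz (Suc h)"
proof -
  have "Mh ((M + 2) / 2) h = Mh M (Suc h)" unfolding Mh_def by (simp add: field_simps)
  moreover have "((Sz - 1) / 2 + 1) / 2 ^ h = (Sz + 1) / 2 ^ Suc h" by (simp add: field_simps)
  ultimately show ?thesis unfolding beta_def by simp
qed

lemma prod_bound: "(1::real) - a \<le> x \<Longrightarrow> 1 - a \<le> y \<Longrightarrow> 0 \<le> a \<Longrightarrow> 0 \<le> x \<Longrightarrow> 0 \<le> y \<Longrightarrow> 1 - 2 * a \<le> x * y"
proof (cases "1 - a \<ge> 0")
  case True
  assume "1 - a \<le> x" "1 - a \<le> y" "0 \<le> a"
  then have "(1 - a) * (1 - a) \<le> x * y" using True by (intro mult_mono) auto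
  moreover have "1 - 2 * a \<le> (1 - a) * (1 - a)" by (simp add: algebra_simps)
  ultimately show ?thesis by linarith
next
  case False
  assume "0 \<le> x" "0 \<le> y" "0 \<le> a"
  then show ?thesis using False by (smt (verit) mult_nonneg_nonneg)
qed



lemma main:
  fixes C :: real
    and S :: "'a set set \<Rightarrow> 'a set set \<times> 'a set set \<times> nat"
    and R :: "'a set set \<Rightarrow> (('a set \<Rightarrow> nat) \<times> nat) pmf"
    and D :: "'a set set \<Rightarrow> ('a set \<Rightarrow> nat) \<times> nat"
  assumes split_spec: "\<And>H. is_graph H \<Longrightarrow>
           (case S H of (E1, E2, t) \<Rightarrow>
              degree_splitting H E1 E2 2 \<and>
              {card E1, card E2} = {card H div 2, (card H + 1) div 2} \<and>
              real t \<le> C * real (card H))"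
    and rand_spec: "\<And>H. is_graph H \<Longrightarrow>
           (\<forall>(\<phi>, t) \<in> set_pmf (R H).
              real t \<le> C * real (maxdeg H) ^ 18 * real (card (verts H))) \<and>
           measure_pmf.prob (R H) {(\<phi>, t). proper_edge_coloring H (maxdeg H + 1) \<phi>}
              \<ge> 1 - 1 / real (maxdeg H) ^ card (verts H)"
    and det_spec: "\<And>H. is_graph H \<Longrightarrow>
           proper_edge_coloring H (maxdeg H + 1) (fst (D H)) \<and>
           real (snd (D H)) \<le> C * real (card H) * real (maxdeg H) * log 2 (real (card (verts H)))"
    and delta: "0 \<le> \<delta>" "1 / 2 powr \<tau> \<le> \<delta>"
  shows "is_graph H \<Longrightarrow> real (maxdeg H) \<le> M \<Longrightarrow> L \<le> real (deg H v) \<Longrightarrow> 4 \<le> (L + 2) / 2 ^ h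
    \<Longrightarrow> Sz \<le> real (card H) \<Longrightarrow>
    1 - 2 ^ h * \<delta> \<le> measure_pmf.prob (edge_coloring S R D \<tau> H h)
      {(\<phi>, p, t). proper_edge_coloring H p \<phi> \<and> real p \<le> M + 3 * 2 ^ h - 2 \<and>
         real t \<le> (C + 1) * h * card H + beta (max C 0) \<tau> M Sz h * card H}"
proof (induction h arbitrary: H M L Sz)
  case 0
  define Cp where "Cp = max C 0"
  have Cp: "0 \<le> Cp" "C \<le> Cp" unfolding Cp_def by auto
  let ?n = "card (verts H)" and ?m = "card H" and ?d = "maxdeg H"
  have d2: "2 \<le> ?d" using 0 deg_le_maxdeg[OF 0(1), of v] by simp
  have dM: "real ?d \<le> M" using 0 by simp
  have b0: "beta Cp \<tau> M Sz 0 = 2 * Cp * M ^ 18 + (if Sz < \<tau>^2 then Cp * M * max 0 (log 2 \<tau>) else 0)"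
    unfolding beta_def Mh_def by simp
  have Mnn: "0 \<le> M" using dM by linarith
  have bnn: "0 \<le> Cp * M * max 0 (log 2 \<tau>)" using Cp Mnn by simp
  show ?case
  proof (cases "\<tau> \<le> real ?n")
    case True
    let ?G = "{(\<phi>, p, t). proper_edge_coloring H p \<phi> \<and> real p \<le> M + 3 * 2 ^ 0 - 2 \<and>
         real t \<le> (C + 1) * real 0 * card H + beta (max C 0) \<tau> M Sz 0 * card H}"
    let ?f = "\<lambda>(\<phi>, t). (\<phi>, ?d + 1, t)"
    have eq: "edge_coloring S R D \<tau> H 0 = map_pmf ?f (R H)" using True by simp
    have rs: "\<forall>(\<phi>, t) \<in> set_pmf (R H). real t \<le> C * real ?d ^ 18 * real ?n"
      "measure_pmf.prob (R H) {(\<phi>, t). proper_edge_coloring H (?d + 1) \<phi>} \<ge> 1 - 1 / real ?d ^ ?n"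
      using rand_spec[OF 0(1)] by auto
    have sub: "{(\<phi>, t). proper_edge_coloring H (?d + 1) \<phi>} \<inter> set_pmf (R H) \<subseteq> ?f -` ?G"
    proof safe
      fix \<phi> t assume pr: "proper_edge_coloring H (?d + 1) \<phi>" and st: "(\<phi>, t) \<in> set_pmf (R H)"
      have "real t \<le> C * real ?d ^ 18 * real ?n" using rs(1) st by auto
      also have "\<dots> \<le> Cp * M ^ 18 * (2 * real ?m)"
        using Cp dM card_verts_le[OF 0(1)]
        by (intro mult_mono power_mono) auto
      also have "\<dots> \<le> beta (max C 0) \<tau> M Sz 0 * card H"
        unfolding Cp_def[symmetric] b0 using bnn by (simp add: algebra_simps)
      finally show "(\<phi>, t) \<in> ?f -` ?G" using pr dM by simp
    qed
    have "1 / real ?d ^ ?n \<le> 1 / 2 ^ ?n"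
      using d2 by (intro divide_left_mono power_mono) auto
    also have "\<dots> \<le> 1 / 2 powr \<tau>"
      using True by (intro divide_left_mono) (auto simp: powr_realpow[symmetric])
    finally have "1 - \<delta> \<le> measure_pmf.prob (R H) {(\<phi>, t). proper_edge_coloring H (?d + 1) \<phi>}"
      using rs(2) delta by linarith
    also have "\<dots> = measure_pmf.prob (R H) ({(\<phi>, t). proper_edge_coloring H (?d + 1) \<phi>} \<inter> set_pmf (R H))"
      by (simp add: measure_Int_set_pmf)
    also have "\<dots> \<le> measure_pmf.prob (R H) (?f -` ?G)"
      by (intro measure_pmf.finite_measure_mono sub) auto
    finally show ?thesis unfolding eq by simp
  next
    case False
    obtain \<phi> t where Dt: "D H = (\<phi>, t)" by fastforce
    have eq: "edge_coloring S R D \<tau> H 0 = return_pmf (\<phi>, ?d + 1, t)" using False Dt by simp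
    have ds: "proper_edge_coloring H (?d + 1) \<phi>"
       "real t \<le> C * real ?m * real ?d * log 2 (real ?n)"
      using det_spec[OF 0(1)] Dt by auto
    have lg: "0 \<le> log 2 (real ?n) \<and> log 2 (real ?n) \<le> max 0 (log 2 \<tau>)"
    proof (cases "?n = 0")
      case False
      then have "log 2 (real ?n) \<le> log 2 \<tau>" using \<open>\<not> \<tau> \<le> real ?n\<close> by (subst log_le_cancel_iff) auto
      then show ?thesis using False by auto
    qed (simp add: log_def)
    have "real ?m \<le> real ?n ^ 2" using card_E_le[OF 0(1)] by (metis of_nat_le_iff of_nat_power)
    also have "\<dots> < \<tau> ^ 2" using False by (intro power_strict_mono) auto
    finally have "Sz < \<tau> ^ 2" using 0(5) by linarith
    then have bb: "beta Cp \<tau> M Sz 0 = 2 * Cp * M ^ 18 + Cp * M * max 0 (log 2 \<tau>)" using b0 by simp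
    have "real t \<le> C * real ?m * real ?d * log 2 (real ?n)" by (rule ds(2))
    also have "\<dots> \<le> Cp * real ?m * M * max 0 (log 2 \<tau>)"
      using Cp dM lg by (intro mult_mono) auto
    also have "\<dots> \<le> beta Cp \<tau> M Sz 0 * ?m"
      unfolding bb using Cp Mnn by (simp add: algebra_simps)
    finally have tt: "real t \<le> beta Cp \<tau> M Sz 0 * ?m" .
    have "1 - 2 ^ 0 * \<delta> \<le> 1" using delta by simp
    also have "1 = measure_pmf.prob (edge_coloring S R D \<tau> H 0)
      {(\<phi>, p, t). proper_edge_coloring H p \<phi> \<and> real p \<le> M + 3 * 2 ^ 0 - 2 \<and>
         real t \<le> (C + 1) * real 0 * card H + beta (max C 0) \<tau> M Sz 0 * card H}"
      unfolding eq using ds(1) dM tt by (simp add: Cp_def)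
    finally show ?thesis .
  qed
next
  case (Suc h)
  obtain E1 E2 t0 where St: "S H = (E1, E2, t0)" by (metis prod_cases3)
  have sp: "degree_splitting H E1 E2 2" "{card E1, card E2} = {card H div 2, (card H + 1) div 2}"
    "real t0 \<le> C * real (card H)"
    using split_spec[OF Suc.prems(1)] St by auto
  have un: "E1 \<union> E2 = H" and dj: "E1 \<inter> E2 = {}"
    and dd: "\<And>w. \<bar>int (deg E1 w) - int (deg E2 w)\<bar> \<le> 2"
    using sp(1) unfolding degree_splitting_def by auto
  have fH: "finite H" using Suc.prems(1) unfolding is_graph_def by auto
  have g1: "is_graph E1" and g2: "is_graph E2" using subgraph[OF Suc.prems(1)] un by auto
  have dsum: "\<And>w. deg H w = deg E1 w + deg E2 w" using deg_split[OF fH un dj] by auto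
  have dnat: "\<And>w. deg E1 w \<le> deg E2 w + 2 \<and> deg E2 w \<le> deg E1 w + 2"
  proof -
    fix w
    have "\<bar>int (deg E1 w) - int (deg E2 w)\<bar> \<le> 2" by (rule dd)
    then show "deg E1 w \<le> deg E2 w + 2 \<and> deg E2 w \<le> deg E1 w + 2" by arith
  qed
  have d1: "\<And>w. real (deg E1 w) \<le> (real (deg H w) + 2) / 2 \<and> (real (deg H w) - 2) / 2 \<le> real (deg E1 w)"
  proof -
    fix w
    have a: "real (deg E1 w) \<le> real (deg E2 w) + 2" "real (deg E2 w) \<le> real (deg E1 w) + 2"
      using dnat[of w] by (metis of_nat_add of_nat_le_iff of_nat_numeral)+
    have b: "real (deg H w) = real (deg E1 w) + real (deg E2 w)" using dsum[of w] by simp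
    show "real (deg E1 w) \<le> (real (deg H w) + 2) / 2 \<and> (real (deg H w) - 2) / 2 \<le> real (deg E1 w)"
      using a b by (auto simp: field_simps)
  qed
  have d2: "\<And>w. real (deg E2 w) \<le> (real (deg H w) + 2) / 2 \<and> (real (deg H w) - 2) / 2 \<le> real (deg E2 w)"
  proof -
    fix w
    have a: "real (deg E1 w) \<le> real (deg E2 w) + 2" "real (deg E2 w) \<le> real (deg E1 w) + 2"
      using dnat[of w] by (metis of_nat_add of_nat_le_iff of_nat_numeral)+
    have b: "real (deg H w) = real (deg E1 w) + real (deg E2 w)" using dsum[of w] by simp
    show "real (deg E2 w) \<le> (real (deg H w) + 2) / 2 \<and> (real (deg H w) - 2) / 2 \<le> real (deg E2 w)"
      using a b by (auto simp: field_simps)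
  qed
  have mH: "\<And>w. real (deg H w) \<le> M" using deg_le_maxdeg[OF Suc.prems(1)] Suc.prems(2)
    by (meson of_nat_le_iff order_trans)
  have M0: "0 \<le> M" using Suc.prems(2) by linarith
  have md1: "real (maxdeg E1) \<le> (M + 2) / 2"
  proof (cases "maxdeg E1 = 0")
    case False
    then obtain w where "maxdeg E1 = deg E1 w" using maxdeg_cases[OF g1] by auto
    then show ?thesis using d1[of w] mH[of w] by simp
  qed (use M0 in simp)
  have md2: "real (maxdeg E2) \<le> (M + 2) / 2"
  proof (cases "maxdeg E2 = 0")
    case False
    then obtain w where "maxdeg E2 = deg E2 w" using maxdeg_cases[OF g2] by auto
    then show ?thesis using d2[of w] mH[of w] by simp
  qed (use M0 in simp)
  have L1: "(L - 2) / 2 \<le> real (deg E1 v)" using d1[of v] Suc.prems(3) by (auto simp: field_simps)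
  have L2: "(L - 2) / 2 \<le> real (deg E2 v)" using d2[of v] Suc.prems(3) by (auto simp: field_simps)
  have L4: "4 \<le> ((L - 2) / 2 + 2) / 2 ^ h" using Suc.prems(4) by (simp add: field_simps)
  have cc: "card E1 + card E2 = card H" using un dj fH
    by (metis card_Un_disjoint finite_Un)
  have cd: "card E1 \<ge> card H div 2" "card E2 \<ge> card H div 2" using sp(2)
    by (auto simp: doubleton_eq_iff)
  have hh: "real (card H div 2) \<ge> (real (card H) - 1) / 2" by (auto simp: field_simps)
  have "real (card E1) \<ge> real (card H div 2)" "real (card E2) \<ge> real (card H div 2)"
    using cd by simp_all
  then have S1: "(Sz - 1) / 2 \<le> real (card E1)" and S2: "(Sz - 1) / 2 \<le> real (card E2)"
    using hh Suc.prems(5) by (auto simp: field_simps)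
  define X1 where "X1 = edge_coloring S R D \<tau> E1 h"
  define X2 where "X2 = edge_coloring S R D \<tau> E2 h"
  define \<beta> where "\<beta> = beta (max C 0) \<tau> M Sz (Suc h)"
  define G1 where "G1 = {(\<phi>, p, t). proper_edge_coloring E1 p \<phi> \<and> real p \<le> (M + 2) / 2 + 3 * 2 ^ h - 2 \<and>
         real t \<le> (C + 1) * h * card E1 + \<beta> * card E1}"
  define G2 where "G2 = {(\<phi>, p, t). proper_edge_coloring E2 p \<phi> \<and> real p \<le> (M + 2) / 2 + 3 * 2 ^ h - 2 \<and>
         real t \<le> (C + 1) * h * card E2 + \<beta> * card E2}"
  have P1: "1 - 2 ^ h * \<delta> \<le> measure_pmf.prob X1 G1"
    using Suc.IH[OF g1 md1 L1 L4 S1] unfolding X1_def G1_def \<beta>_def beta_step .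
  have P2: "1 - 2 ^ h * \<delta> \<le> measure_pmf.prob X2 G2"
    using Suc.IH[OF g2 md2 L2 L4 S2] unfolding X2_def G2_def \<beta>_def beta_step .
  define g where "g = (\<lambda>((\<phi>1::'a set \<Rightarrow> nat, p1::nat, t1::nat), (\<phi>2::'a set \<Rightarrow> nat, p2::nat, t2::nat)).
      ((\<lambda>e. if e \<in> E1 then \<phi>1 e else p1 + \<phi>2 e), p1 + p2, t0 + card H + t1 + t2))"
  have eq: "edge_coloring S R D \<tau> H (Suc h) = map_pmf g (pair_pmf X1 X2)"
    unfolding pair_pmf_def map_bind_pmf map_return_pmf X1_def X2_def g_def
    by (auto simp: St case_prod_unfold intro!: bind_pmf_cong ext)
  let ?G = "{(\<phi>, p, t). proper_edge_coloring H p \<phi> \<and> real p \<le> M + 3 * 2 ^ Suc h - 2 \<and>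
         real t \<le> (C + 1) * real (Suc h) * card H + \<beta> * card H}"
  have sub: "(G1 \<inter> set_pmf X1) \<times> (G2 \<inter> set_pmf X2) \<subseteq> g -` ?G"
  proof
    fix x assume xin: "x \<in> (G1 \<inter> set_pmf X1) \<times> (G2 \<inter> set_pmf X2)"
    obtain y z where xyz: "x = (y, z)" by (cases x)
    obtain \<phi>1 p1 t1 where y: "y = (\<phi>1, p1, t1)" by (cases y)
    obtain \<phi>2 p2 t2 where z: "z = (\<phi>2, p2, t2)" by (cases z)
    have a1: "(\<phi>1, p1, t1) \<in> G1" and a2: "(\<phi>2, p2, t2) \<in> G2" using xin unfolding xyz y z by auto
    have pr1: "proper_edge_coloring E1 p1 \<phi>1" and pp1: "real p1 \<le> (M + 2) / 2 + 3 * 2 ^ h - 2"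
      and tt1: "real t1 \<le> (C + 1) * h * card E1 + \<beta> * card E1" using a1 unfolding G1_def by auto
    have pr2: "proper_edge_coloring E2 p2 \<phi>2" and pp2: "real p2 \<le> (M + 2) / 2 + 3 * 2 ^ h - 2"
      and tt2: "real t2 \<le> (C + 1) * h * card E2 + \<beta> * card E2" using a2 unfolding G2_def by auto
    let ?\<phi> = "\<lambda>e. if e \<in> E1 then \<phi>1 e else p1 + \<phi>2 e"
    have c1: "\<forall>e\<in>H. ?\<phi> e \<in> {1..p1 + p2}" using pr1 pr2 un unfolding proper_edge_coloring_def by auto
    have c2: "\<forall>e\<in>H. \<forall>e'\<in>H. e \<noteq> e' \<and> e \<inter> e' \<noteq> {} \<longrightarrow> ?\<phi> e \<noteq> ?\<phi> e'"
    proof (intro ballI impI notI)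
      fix e e' assume e0: "e \<in> H" "e' \<in> H" "e \<noteq> e' \<and> e \<inter> e' \<noteq> {}" and e5: "?\<phi> e = ?\<phi> e'"
      have e: "e \<in> H" "e' \<in> H" "e \<noteq> e'" "e \<inter> e' \<noteq> {}" "?\<phi> e = ?\<phi> e'" using e0 e5 by auto
      show False
      proof (cases "e \<in> E1")
        case True
        show False
        proof (cases "e' \<in> E1")
          case True
          then show False using pr1 e \<open>e \<in> E1\<close> unfolding proper_edge_coloring_def by auto
        next
          case False
          then have "e' \<in> E2" using e un by auto
          then have "1 \<le> \<phi>2 e'" using pr2 unfolding proper_edge_coloring_def by auto
          moreover have "\<phi>1 e \<le> p1" using pr1 \<open>e \<in> E1\<close> unfolding proper_edge_coloring_def by auto
          ultimately show False using e(5) \<open>e \<in> E1\<close> False by simp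
        qed
      next
        case False
        then have e2: "e \<in> E2" using e un by auto
        show False
        proof (cases "e' \<in> E1")
          case True
          then have "\<phi>1 e' \<le> p1" using pr1 unfolding proper_edge_coloring_def by auto
          moreover have "1 \<le> \<phi>2 e" using pr2 e2 unfolding proper_edge_coloring_def by auto
          ultimately show False using e(5) True False by simp
        next
          case F2: False
          then have "e' \<in> E2" using e un by auto
          then show False using pr2 e e2 False F2 unfolding proper_edge_coloring_def by auto
        qed
      qed
    qed
    have "proper_edge_coloring H (p1 + p2) ?\<phi>"
      unfolding proper_edge_coloring_def using c1 c2 by blast
    moreover have "real (p1 + p2) \<le> M + 3 * 2 ^ Suc h - 2" using pp1 pp2 by (simp add: field_simps)
    moreover have "real (t0 + card H + t1 + t2) \<le> (C + 1) * real (Suc h) * card H + \<beta> * card H"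
    proof -
      have "real (t0 + card H + t1 + t2) \<le> C * card H + card H + ((C + 1) * h * card E1 + \<beta> * card E1)
          + ((C + 1) * h * card E2 + \<beta> * card E2)" using sp(3) tt1 tt2 by simp
      also have "\<dots> = (C + 1) * real (Suc h) * card H + \<beta> * card H"
        proof -
          have ccr: "real (card H) = real (card E1) + real (card E2)" using cc by (metis of_nat_add)
          show ?thesis unfolding ccr by (simp add: algebra_simps)
        qed
      finally show ?thesis .
    qed
    ultimately show "x \<in> g -` ?G" unfolding xyz y z g_def by simp
  qed
  have "1 - 2 ^ Suc h * \<delta> = 1 - 2 * (2 ^ h * \<delta>)" by simp
  also have "\<dots> \<le> measure_pmf.prob X1 G1 * measure_pmf.prob X2 G2"
    using P1 P2 delta by (intro prod_bound) auto
  also have "\<dots> = measure_pmf.prob X1 (G1 \<inter> set_pmf X1) * measure_pmf.prob X2 (G2 \<inter> set_pmf X2)"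
    by (simp add: measure_Int_set_pmf)
  also have "\<dots> = measure_pmf.prob (pair_pmf X1 X2) ((G1 \<inter> set_pmf X1) \<times> (G2 \<inter> set_pmf X2))"
    by (rule measure_pmf_prob_product[symmetric]) (auto intro: countable_subset)
  also have "\<dots> \<le> measure_pmf.prob (pair_pmf X1 X2) (g -` ?G)"
    by (intro measure_pmf.finite_measure_mono sub) auto
  finally show ?case unfolding eq \<beta>_def by simp
qed



lemma pow_cube: assumes "(u::real) \<ge> 0" shows "(u * ln 2 / 3) ^ 3 \<le> 2 powr u"
proof -
  have "2 powr u = exp (u * ln 2)" by (simp add: powr_def)
  also have "\<dots> = exp (real 3 * (u * ln 2 / 3))" by simp
  also have "\<dots> = exp (u * ln 2 / 3) ^ 3" by (rule exp_of_nat_mult)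
  finally have eq: "2 powr u = exp (u * ln 2 / 3) ^ 3" .
  have "u * ln 2 / 3 \<le> exp (u * ln 2 / 3)" using exp_ge_add_one_self[of "u * ln 2 / 3"] by linarith
  then have "(u * ln 2 / 3) ^ 3 \<le> exp (u * ln 2 / 3) ^ 3"
    using assms by (intro power_mono) auto
  then show ?thesis using eq by simp
qed


definition Bc :: "real \<Rightarrow> real" where "Bc c = (5 * (c + 1) / (ln 2 / 3) ^ 3) ^ 2"

lemma usq:
  fixes u c h :: real
  assumes u1: "1 \<le> u" and c: "0 < c" and h: "0 \<le> h" and pw: "2 powr u \<le> (c + 1) * (h + 2 + 2 * u)"
  shows "u ^ 2 \<le> h + Bc c"
proof -
  define a :: real where "a = (ln 2 / 3) ^ 3"
  have a: "0 < a" unfolding a_def by simp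
  define U where "U = 5 * (c + 1) / a"
  have B: "Bc c = U ^ 2" unfolding Bc_def U_def a_def ..
  show ?thesis
  proof (cases "u \<le> U")
    case True
    then have "u ^ 2 \<le> U ^ 2" using u1 by (intro power_mono) auto
    then show ?thesis using B h by linarith
  next
    case False
    then have "U < u" by simp
    then have "U * a < u * a" using a by (rule mult_strict_right_mono)
    moreover have "U * a = 5 * (c + 1)" unfolding U_def using a by simp
    ultimately have "5 * (c + 1) < a * u" by (simp add: mult.commute)
    then have "5 * (c + 1) * u ^ 2 < a * u * u ^ 2" using u1 by (intro mult_strict_right_mono) auto
    also have "a * u * u ^ 2 = (u * ln 2 / 3) ^ 3" unfolding a_def power3_eq_cube power2_eq_square by simp
    also have "\<dots> \<le> 2 powr u" using u1 by (intro pow_cube) auto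
    also have "\<dots> \<le> (c + 1) * (h + 2 + 2 * u)" by (rule pw)
    finally have "(c + 1) * (5 * u ^ 2) < (c + 1) * (h + 2 + 2 * u)" by (simp only: mult.assoc mult.commute mult.left_commute)
    then have k: "5 * u ^ 2 < h + 2 + 2 * u" using c by (simp add: mult_less_cancel_left_pos)
    have "u * 1 \<le> u * u" using u1 by (intro mult_left_mono) auto
    then have "2 + 2 * u \<le> 4 * u ^ 2" using u1 unfolding power2_eq_square by linarith
    moreover have "0 \<le> U ^ 2" by simp
    ultimately show ?thesis using B k by linarith
  qed
qed

lemma xu: "(x::real) * u \<le> x ^ 2 + u ^ 2"
proof -
  have "0 \<le> (x - u) ^ 2" by simp
  then have "2 * (x * u) \<le> x ^ 2 + u ^ 2" by (simp add: power2_diff)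
  moreover have "0 \<le> x ^ 2 + u ^ 2" by simp
  ultimately show ?thesis by linarith
qed



lemma beta_bound:
  fixes Cp c \<tau> \<Delta> m n :: real and h :: nat
  assumes Cp: "0 \<le> Cp" and c: "0 < c" and D: "4 * 2 ^ h \<le> \<Delta>" and nm: "n \<le> 2 * m"
    and tau: "\<tau> = (c + 1) * log 2 n" and ln2: "2 \<le> log 2 n" and n0: "0 < n"
  shows "beta Cp \<tau> \<Delta> m h \<le> (2 * (3/2) ^ 18 * Cp + 3/2 * Cp * (1 + Bc c)) * (\<Delta> / 2 ^ h) ^ 18 + 3/2 * Cp * h"
proof -
  define x where "x = \<Delta> / 2 ^ h"
  have x4: "4 \<le> x" unfolding x_def using D by (simp add: field_simps)
  have hp: "(0::real) < 2 ^ h" by simp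
  have "(\<Delta> - 2) / 2 ^ h \<le> x" unfolding x_def using hp by (intro divide_right_mono) auto
  then have Mx: "Mh \<Delta> h \<le> 3/2 * x" unfolding Mh_def using x4 by linarith
  have h1: "(1::real) \<le> 2 ^ h" by simp
  have "2 \<le> \<Delta>" using D h1 by linarith
  then have "0 \<le> (\<Delta> - 2) / 2 ^ h" by simp
  then have M0: "0 \<le> Mh \<Delta> h" unfolding Mh_def by linarith
  have x18: "1 \<le> x ^ 18" using x4 by (simp add: one_le_power)
  have B0: "0 \<le> Bc c" unfolding Bc_def by simp
  have t1: "2 * Cp * Mh \<Delta> h ^ 18 \<le> 2 * (3/2) ^ 18 * Cp * x ^ 18"
  proof -
    have "Mh \<Delta> h ^ 18 \<le> (3/2 * x) ^ 18" using M0 Mx by (intro power_mono) auto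
    then have "2 * Cp * Mh \<Delta> h ^ 18 \<le> 2 * Cp * (3/2 * x) ^ 18" using Cp by (intro mult_left_mono) auto
    moreover have "(3/2 * x) ^ 18 = (3/2) ^ 18 * x ^ 18" by (rule power_mult_distrib)
    ultimately show ?thesis by (simp add: algebra_simps)
  qed
  have t2: "(if (m + 1) / 2 ^ h - 1 < \<tau>^2 then Cp * Mh \<Delta> h * max 0 (log 2 \<tau>) else 0)
      \<le> 3/2 * Cp * (1 + Bc c) * x ^ 18 + 3/2 * Cp * h"
  proof (cases "(m + 1) / 2 ^ h - 1 < \<tau>^2")
    case False
    then show ?thesis using Cp B0 x18 by simp
  next
    case True
    define u where "u = log 2 \<tau>"
    have tau2: "2 \<le> \<tau>"
    proof -
      have "1 * 2 \<le> (c + 1) * log 2 n" using ln2 c by (intro mult_mono) auto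
      then show ?thesis unfolding tau by simp
    qed
    have u1: "1 \<le> u" unfolding u_def using tau2 by (simp add: le_log_iff)
    have pu: "2 powr u = \<tau>" unfolding u_def using tau2 by simp
    have "m + 1 < 2 ^ h * (\<tau>^2 + 1)" using True hp by (simp add: field_simps)
    then have "n < 2 ^ h * (2 * (\<tau>^2 + 1))" using nm by linarith
    also have "\<dots> \<le> 2 ^ h * (4 * \<tau>^2)"
    proof -
      have "1 \<le> \<tau>^2" using tau2 by (simp add: one_le_power)
      then show ?thesis using hp by (intro mult_left_mono) auto
    qed
    finally have nl: "n < 2 ^ h * (4 * \<tau>^2)" .
    have "log 2 n < log 2 (2 ^ h * (4 * \<tau>^2))" using nl n0 tau2 by (subst log_less_cancel_iff) auto
    also have "\<dots> = real h + 2 + 2 * u"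
    proof -
      have "log 2 (2 ^ h * (4 * \<tau>^2)) = log 2 (2 ^ h) + log 2 4 + log 2 (\<tau>^2)"
        using tau2 by (simp add: log_mult)
      also have "log 2 (2 ^ h) = h" by (simp add: log_nat_power)
      also have "log (2::real) 4 = 2"
      proof -
        have "log (2::real) 4 = log 2 (2 ^ 2)" by simp
        also have "\<dots> = 2" by (subst log_nat_power) auto
        finally show ?thesis .
      qed
      also have "log 2 (\<tau>^2) = 2 * u" unfolding u_def using tau2 by (simp add: log_nat_power)
      finally show ?thesis .
    qed
    finally have "log 2 n < real h + 2 + 2 * u" .
    then have "2 powr u \<le> (c + 1) * (real h + 2 + 2 * u)" unfolding pu tau using c
      by (intro mult_left_mono) auto
    then have uh: "u ^ 2 \<le> h + Bc c" using u1 c by (intro usq) auto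
    have "Cp * Mh \<Delta> h * max 0 (log 2 \<tau>) = Cp * (Mh \<Delta> h * u)" using u1 unfolding u_def by simp
    also have "\<dots> \<le> Cp * (3/2 * x * u)" using Cp Mx u1 by (intro mult_left_mono mult_right_mono) auto
    also have "\<dots> = 3/2 * Cp * (x * u)" by simp
    also have "\<dots> \<le> 3/2 * Cp * (x ^ 18 + h + Bc c * x ^ 18)"
    proof -
      have "x ^ 2 \<le> x ^ 18" using x4 by (intro power_increasing) auto
      moreover have "Bc c \<le> Bc c * x ^ 18" using B0 x18 by (simp add: mult_le_cancel_left1)
      ultimately have "x * u \<le> x ^ 18 + h + Bc c * x ^ 18" using xu[of x u] uh by linarith
      then show ?thesis using Cp by (intro mult_left_mono) auto
    qed
    also have "\<dots> = 3/2 * Cp * (1 + Bc c) * x ^ 18 + 3/2 * Cp * h" by (simp add: algebra_simps)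
    finally show ?thesis using True by simp
  qed
  show ?thesis unfolding beta_def using t1 t2 unfolding x_def by (simp add: algebra_simps)
qed



theorem corollary3p10:
  fixes c C :: real
    and S :: "'a set set \<Rightarrow> 'a set set \<times> 'a set set \<times> nat"
    and R :: "'a set set \<Rightarrow> (('a set \<Rightarrow> nat) \<times> nat) pmf"
    and D :: "'a set set \<Rightarrow> ('a set \<Rightarrow> nat) \<times> nat"
  assumes c_pos: "c > 0"
    and split_spec: "\<And>H. is_graph H \<Longrightarrow>
           (case S H of (E1, E2, t) \<Rightarrow>
              degree_splitting H E1 E2 2 \<and>
              {card E1, card E2} = {card H div 2, (card H + 1) div 2} \<and>
              real t \<le> C * real (card H))"
    and rand_spec: "\<And>H. is_graph H \<Longrightarrow>
           (\<forall>(\<phi>, t) \<in> set_pmf (R H).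
              real t \<le> C * real (maxdeg H) ^ 18 * real (card (verts H))) \<and>
           measure_pmf.prob (R H) {(\<phi>, t). proper_edge_coloring H (maxdeg H + 1) \<phi>}
              \<ge> 1 - 1 / real (maxdeg H) ^ card (verts H)"
    and det_spec: "\<And>H. is_graph H \<Longrightarrow>
           proper_edge_coloring H (maxdeg H + 1) (fst (D H)) \<and>
           real (snd (D H)) \<le> C * real (card H) * real (maxdeg H) * log 2 (real (card (verts H)))"
  shows "\<exists>K. \<forall>(E :: 'a set set) (h :: nat). is_graph E \<longrightarrow>
           log 2 (real (maxdeg E) * log 2 (log 2 (real (card (verts E))))
                  / (4 * log 2 (real (card (verts E))))) \<le> real h \<longrightarrow>
           real h \<le> log 2 (real (maxdeg E)) - 2 \<longrightarrow>
           measure_pmf.prob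
             (edge_coloring S R D ((c + 1) * log 2 (real (card (verts E)))) E h)
             {(\<phi>, p, t). proper_edge_coloring E (maxdeg E + 3 * 2 ^ h) \<phi> \<and>
                real t \<le> K * (real (card E) * (real (maxdeg E) / 2 ^ h) ^ 18
                               + real (card E) * real h)}
           \<ge> 1 - 1 / real (card (verts E)) powr c"
proof -
  define Cp where "Cp = max C 0"
  have Cp0: "0 \<le> Cp" unfolding Cp_def by simp
  define K1 where "K1 = 2 * (3/2) ^ 18 * Cp + 3/2 * Cp * (1 + Bc c)"
  define K where "K = \<bar>C + 1\<bar> + 3/2 * Cp + K1"
  have B0: "0 \<le> Bc c" unfolding Bc_def by simp
  have K10: "0 \<le> K1" unfolding K1_def using Cp0 B0 by simp
  show ?thesis
  proof (rule exI[of _ K], intro allI impI)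
    fix E :: "'a set set" and h :: nat
    assume g: "is_graph E"
      and hyp: "real h \<le> log 2 (real (maxdeg E)) - 2"
    let ?n = "card (verts E)" and ?m = "card E" and ?d = "maxdeg E"
    have d0: "?d \<noteq> 0"
    proof
      assume "?d = 0"
      then show False using hyp by (simp add: log_def)
    qed
    have "2 powr (real h + 2) \<le> 2 powr (log 2 (real ?d))" using hyp by (intro powr_mono) auto
    also have "\<dots> = real ?d" using d0 by simp
    finally have p4: "4 * 2 ^ h \<le> real ?d" by (simp add: powr_add powr_realpow)
    obtain v where dv: "?d = deg E v" using maxdeg_cases[OF g] d0 by auto
    have dn: "?d \<le> ?n" using deg_le_card_verts[OF g, of v] dv by simp
    have h1: "(1::real) \<le> 2 ^ h" by simp
    have n4: "4 \<le> real ?n" using p4 h1 dn by (smt (verit) of_nat_le_iff)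
    have n0: "0 < real ?n" using n4 by linarith
    define \<tau> where "\<tau> = (c + 1) * log 2 (real ?n)"
    have ln2: "2 \<le> log 2 (real ?n)"
    proof -
      have l4: "log (2::real) 4 = 2"
      proof -
        have "log (2::real) 4 = log 2 (2 ^ 2)" by simp
        also have "\<dots> = 2" by (subst log_nat_power) auto
        finally show ?thesis .
      qed
      have "log 2 4 \<le> log 2 (real ?n)" using n4 by (subst log_le_cancel_iff) auto
      then show ?thesis using l4 by linarith
    qed
    have ptau: "2 powr \<tau> = real ?n powr (c + 1)"
    proof -
      have "2 powr \<tau> = 2 powr (log 2 (real ?n) * (c + 1))" unfolding \<tau>_def by (simp add: mult.commute)
      also have "\<dots> = (2 powr (log 2 (real ?n))) powr (c + 1)" by (rule powr_powr[symmetric])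
      also have "\<dots> = real ?n powr (c + 1)" using n0 by simp
      finally show ?thesis .
    qed
    define \<delta> where "\<delta> = 1 / 2 powr \<tau>"
    have del0: "0 \<le> \<delta>" unfolding \<delta>_def by simp
    have nm: "real ?n \<le> 2 * real ?m" using card_verts_le[OF g] by (metis of_nat_le_iff of_nat_mult of_nat_numeral)
    let ?G = "{(\<phi>, p, t). proper_edge_coloring E p \<phi> \<and> real p \<le> real ?d + 3 * 2 ^ h - 2 \<and>
         real t \<le> (C + 1) * h * ?m + beta (max C 0) \<tau> (real ?d) (real ?m) h * ?m}"
    have P: "1 - 2 ^ h * \<delta> \<le> measure_pmf.prob (edge_coloring S R D \<tau> E h) ?G"
      by (rule main[OF split_spec rand_spec det_spec del0, of \<tau> E "real ?d" "real ?d" v h "real ?m"])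
         (use g dv p4 in \<open>auto simp: \<delta>_def field_simps\<close>)
    have "2 ^ h * \<delta> \<le> 1 / real ?n powr c"
    proof -
      have "2 ^ h * \<delta> = 2 ^ h / (real ?n * real ?n powr c)"
        unfolding \<delta>_def ptau using n0 by (simp add: powr_add)
      also have "\<dots> \<le> real ?n / (real ?n * real ?n powr c)"
      proof -
        have dnr: "real ?d \<le> real ?n" using dn by simp
        have "(2::real) ^ h \<le> real ?n" using p4 dnr h1 by linarith
        then show ?thesis using n0 by (intro divide_right_mono) auto
      qed
      also have "\<dots> = 1 / real ?n powr c" using n0 by simp
      finally show ?thesis .
    qed
    then have "1 - 1 / real ?n powr c \<le> measure_pmf.prob (edge_coloring S R D \<tau> E h) ?G" using P by linarith
    also have "\<dots> \<le> measure_pmf.prob (edge_coloring S R D \<tau> E h)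
             {(\<phi>, p, t). proper_edge_coloring E (?d + 3 * 2 ^ h) \<phi> \<and>
                real t \<le> K * (real ?m * (real ?d / 2 ^ h) ^ 18 + real ?m * real h)}"
    proof (intro measure_pmf.finite_measure_mono subsetI)
      fix x assume "x \<in> ?G"
      then obtain \<phi> p t where x: "x = (\<phi>, p, t)" and pr: "proper_edge_coloring E p \<phi>"
        and pp: "real p \<le> real ?d + 3 * 2 ^ h - 2"
        and tt: "real t \<le> (C + 1) * h * ?m + beta Cp \<tau> (real ?d) (real ?m) h * ?m"
        unfolding Cp_def by auto
      have "real p \<le> real (?d + 3 * 2 ^ h)" using pp by simp
      then have pr2: "proper_edge_coloring E (?d + 3 * 2 ^ h) \<phi>"
        using proper_mono[OF pr] of_nat_le_iff by blast
      have bb: "beta Cp \<tau> (real ?d) (real ?m) h \<le> K1 * (real ?d / 2 ^ h) ^ 18 + 3/2 * Cp * h"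
        unfolding K1_def using beta_bound[OF Cp0 c_pos p4 nm \<tau>_def ln2 n0] .
      define y where "y = (real ?d / 2 ^ h) ^ 18"
      have y0: "0 \<le> y" unfolding y_def by simp
      have "real t \<le> (C + 1) * h * ?m + beta Cp \<tau> (real ?d) (real ?m) h * ?m" by (rule tt)
      also have "\<dots> \<le> \<bar>C + 1\<bar> * h * ?m + (K1 * y + 3/2 * Cp * h) * ?m"
        using bb unfolding y_def[symmetric]
        by (intro add_mono mult_right_mono) auto
      also have "\<dots> = (\<bar>C + 1\<bar> + 3/2 * Cp) * (real ?m * real h) + K1 * (real ?m * y)"
        by (simp add: algebra_simps)
      also have "\<dots> \<le> K * (real ?m * real h) + K * (real ?m * y)"
      proof -
        have kA: "\<bar>C + 1\<bar> + 3/2 * Cp \<le> K" unfolding K_def using K10 by linarith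
        have kB: "K1 \<le> K" unfolding K_def using Cp0 by linarith
        have "(\<bar>C + 1\<bar> + 3/2 * Cp) * (real ?m * real h) \<le> K * (real ?m * real h)"
          using kA by (rule mult_right_mono) simp
        moreover have "K1 * (real ?m * y) \<le> K * (real ?m * y)"
          using kB y0 by (intro mult_right_mono) auto
        ultimately show ?thesis by linarith
      qed
      also have "\<dots> = K * (real ?m * y + real ?m * real h)" by (simp add: algebra_simps)
      finally show "x \<in> {(\<phi>, p, t). proper_edge_coloring E (?d + 3 * 2 ^ h) \<phi> \<and>
                real t \<le> K * (real ?m * (real ?d / 2 ^ h) ^ 18 + real ?m * real h)}"
        using x pr2 unfolding y_def by simp
    qed auto
    finally show "1 - 1 / real ?n powr c \<le> measure_pmf.prob
             (edge_coloring S R D ((c + 1) * log 2 (real ?n)) E h)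
             {(\<phi>, p, t). proper_edge_coloring E (?d + 3 * 2 ^ h) \<phi> \<and>
                real t \<le> K * (real ?m * (real ?d / 2 ^ h) ^ 18 + real ?m * real h)}"
      unfolding \<tau>_def .
  qed
qed


end
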